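(* The optimal index-codelength for a multi-sender index-coding instance represented by $(\mathcal{G},\mathcal{U})$ is lower bounded as \begin{equation} \tilde{\ell}^*(\mathcal{G},\mathcal{U}) \geq \max V_\text{out}(\mathcal{G}^\dagger), \end{equation} where $\mathcal{G}^\dagger$ is the resultant graph after running the prune/append algorithm described in the context, and the maximization is taken over all possible sequences of pruning/appending the leaf SCCs in the algorithm.
   Context: Multi-sender single-uniprior index coding with binary messages: there are $n$ one-bit messages $x_1,\dots,x_n$ and $n$ receivers; receiver $i$ knows only $x_i$ a priori. The information-flow graph $\mathcal{G}$ on vertex set $\{1,\dots,n\}$ has an arc $(i\rightarrow j)$ iff receiver $j$ requests $x_i$. There are $S$ senders, sender $s$ knowing a subset $\mathcal{M}_s$ of the messages (every message is known to some sender); each sender transmits a codeword that is a function of its own messages only, all codewords are received noiselessly by all receivers, and $\tilde{\ell}^*(\mathcal{G},\mathcal{U})$ is the minimum total number of transmitted bits such that every receiver decodes its requested messages. The message graph $\mathcal{U}$ is the undirected graph on $\{1,\dots,n\}$ with an edge $(i,j)$ iff some sender knows both $x_i$ and $x_j$. $V_\text{out}(\mathcal{G})$ denotes the number of non-leaf vertices (vertices with at least one outgoing arc) of $\mathcal{G}$. A leaf SCC is a strongly connected component of $\mathcal{G}$ with at least two vertices and no arc leaving it; a graph is grounded if every vertex is a leaf vertex or has a directed path to a leaf vertex (equivalently, it has no leaf SCC). A leaf SCC with vertex set $\mathcal{V}_\text{S}$ is message-connected if any two of its vertices are joined by a path in $\mathcal{U}$ using only vertices of $\mathcal{V}_\text{S}$;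 message-disconnected if some two of its vertices are joined by no path in $\mathcal{U}$ at all; otherwise semi-message-connected. A semi-message-connected leaf SCC is degenerated if there exist $\mathcal{V}_\text{inside} \subset \mathcal{V}_\text{S}$ and $\mathcal{V}_\text{outside} \subseteq \mathcal{V}\setminus\mathcal{V}_\text{S}$ such that there is no edge of $\mathcal{U}$ between $\mathcal{V}_\text{inside}$ and $\mathcal{V}_\text{S}\setminus\mathcal{V}_\text{inside}$, $\mathcal{V}_\text{outside}$ contains at most one non-leaf vertex, and every $\mathcal{U}$-neighbor of $\mathcal{V}_\text{inside}$ (outside $\mathcal{V}_\text{inside}$) is either in $\mathcal{V}_\text{outside}$ or a predecessor in $\mathcal{G}$ of some vertex of $\mathcal{V}_\text{outside}$; otherwise it is non-degenerated. Operations: pruning a leaf SCC = pick any vertex of it and remove all its outgoing arcs. Appending a message-disconnected leaf SCC = add a dummy vertex $n+1$ (with $x_{n+1}=0$ known to all receivers) to $\mathcal{G}$ and $\mathcal{U}$ and an arc from some vertex of the SCC to $n+1$. Appending a degenerated leaf SCC = pick $v_\text{inside}\in\mathcal{V}_\text{inside}$ and add an arc from $v_\text{inside}$ to the unique non-leaf vertex of $\mathcal{V}_\text{outside}$ if there is one, otherwise to an arbitrary vertex of $\mathcal{V}_\text{outside}$. The algorithm repeatedly selects a leaf SCC and appends it if it is message-disconnected or degenerated, and prunes it if it is message-connected or non-degenerated, until the graph is grounded; the resulting graph is $\mathcal{G}^\dagger$. It terminates after finitely many steps. *)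

theory Defs
  imports Main
begin

text \<open>Messages/receivers are indexed by 1..n, senders by 1..S; sender s knows
the messages with indices in M s. A message assignment is x :: nat \<Rightarrow> bool
(only the values on 1..n matter). The information-flow graph is a set of arcs A,
(i,j) \<in> A meaning receiver j requests x_i.\<close>

definition valid_code ::
  "nat \<Rightarrow> (nat \<Rightarrow> nat set) \<Rightarrow> (nat \<times> nat) set \<Rightarrow> (nat \<Rightarrow> nat)
     \<Rightarrow> (nat \<Rightarrow> (nat \<Rightarrow> bool) \<Rightarrow> bool list) \<Rightarrow> bool" where
  "valid_code S M A l E \<longleftrightarrow>
     (\<forall>s\<in>{1..S}. \<forall>x. length (E s x) = l s) \<and>
     (\<forall>s\<in>{1..S}. \<forall>x y. (\<forall>k\<in>M s. x k = y k) \<longrightarrow> E s x = E s y) \<and>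
     (\<forall>(i,j)\<in>A. \<exists>D :: bool list list \<Rightarrow> bool \<Rightarrow> bool.
         \<forall>x. D (map (\<lambda>s. E s x) [1..<Suc S]) (x j) = x i)"

definition opt_codelength :: "nat \<Rightarrow> (nat \<Rightarrow> nat set) \<Rightarrow> (nat \<times> nat) set \<Rightarrow> nat" where
  "opt_codelength S M A =
     (LEAST L. \<exists>l E. valid_code S M A l E \<and> L = (\<Sum>s\<in>{1..S}. l s))"

definition msg_edges :: "nat \<Rightarrow> (nat \<Rightarrow> nat set) \<Rightarrow> (nat \<times> nat) set" where
  "msg_edges S M = {(i,j). i \<noteq> j \<and> (\<exists>s\<in>{1..S}. i \<in> M s \<and> j \<in> M s)}"

definition nonleaf :: "(nat \<times> nat) set \<Rightarrow> nat \<Rightarrow> bool" where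
  "nonleaf A v \<longleftrightarrow> (\<exists>w. (v,w) \<in> A)"

definition V_out :: "nat set \<Rightarrow> (nat \<times> nat) set \<Rightarrow> nat" where
  "V_out V A = card {v\<in>V. nonleaf A v}"

definition is_SCC :: "nat set \<Rightarrow> (nat \<times> nat) set \<Rightarrow> nat set \<Rightarrow> bool" where
  "is_SCC V A C \<longleftrightarrow> C \<noteq> {} \<and> C \<subseteq> V \<and>
     (\<forall>x\<in>C. \<forall>y\<in>C. (x,y) \<in> A\<^sup>*) \<and>
     (\<forall>y\<in>V. (\<exists>x\<in>C. (x,y) \<in> A\<^sup>* \<and> (y,x) \<in> A\<^sup>*) \<longrightarrow> y \<in> C)"

definition leaf_SCC :: "nat set \<Rightarrow> (nat \<times> nat) set \<Rightarrow> nat set \<Rightarrow> bool" where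
  "leaf_SCC V A C \<longleftrightarrow> is_SCC V A C \<and> card C \<ge> 2 \<and>
     (\<forall>x y. x \<in> C \<and> (x,y) \<in> A \<longrightarrow> y \<in> C)"

definition grounded :: "nat set \<Rightarrow> (nat \<times> nat) set \<Rightarrow> bool" where
  "grounded V A \<longleftrightarrow> (\<forall>v\<in>V. \<not> nonleaf A v \<or> (\<exists>u. \<not> nonleaf A u \<and> (v,u) \<in> A\<^sup>+))"

definition msg_connected :: "(nat \<times> nat) set \<Rightarrow> nat set \<Rightarrow> bool" where
  "msg_connected UE C \<longleftrightarrow> (\<forall>a\<in>C. \<forall>b\<in>C. (a,b) \<in> (UE \<inter> (C \<times> C))\<^sup>*)"

definition msg_disconnected :: "(nat \<times> nat) set \<Rightarrow> nat set \<Rightarrow> bool" where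
  "msg_disconnected UE C \<longleftrightarrow> (\<exists>a\<in>C. \<exists>b\<in>C. (a,b) \<notin> (UE \<union> UE\<inverse>)\<^sup>*)"

definition semi_msg_connected :: "(nat \<times> nat) set \<Rightarrow> nat set \<Rightarrow> bool" where
  "semi_msg_connected UE C \<longleftrightarrow> \<not> msg_connected UE C \<and> \<not> msg_disconnected UE C"

definition degen_witness ::
  "(nat \<times> nat) set \<Rightarrow> nat set \<Rightarrow> (nat \<times> nat) set \<Rightarrow> nat set \<Rightarrow> nat set \<Rightarrow> nat set \<Rightarrow> bool" where
  "degen_witness UE V A C Vin Vout \<longleftrightarrow>
     Vin \<noteq> {} \<and> Vin \<subset> C \<and> Vout \<subseteq> V - C \<and>
     (\<forall>a\<in>Vin. \<forall>b\<in>C - Vin. (a,b) \<notin> UE \<and> (b,a) \<notin> UE) \<and>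
     card {v\<in>Vout. nonleaf A v} \<le> 1 \<and>
     (\<forall>u. u \<notin> Vin \<and> (\<exists>w\<in>Vin. (w,u) \<in> UE \<or> (u,w) \<in> UE) \<longrightarrow>
          u \<in> Vout \<or> (\<exists>t\<in>Vout. (u,t) \<in> A))"

definition degenerated ::
  "(nat \<times> nat) set \<Rightarrow> nat set \<Rightarrow> (nat \<times> nat) set \<Rightarrow> nat set \<Rightarrow> bool" where
  "degenerated UE V A C \<longleftrightarrow> semi_msg_connected UE C \<and> (\<exists>Vin Vout. degen_witness UE V A C Vin Vout)"

definition prune_step :: "nat set \<Rightarrow> (nat \<times> nat) set \<Rightarrow> nat set \<Rightarrow> nat set \<Rightarrow> (nat \<times> nat) set \<Rightarrow> bool" where
  "prune_step V A C V' A' \<longleftrightarrow> (\<exists>v\<in>C. V' = V \<and> A' = A - {(v,w) | w. True})"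

text \<open>Appending a message-disconnected leaf SCC: a fresh dummy vertex (isolated in U)
and an arc from a vertex of C to it.\<close>
definition append_disc_step :: "nat set \<Rightarrow> (nat \<times> nat) set \<Rightarrow> nat set \<Rightarrow> nat set \<Rightarrow> (nat \<times> nat) set \<Rightarrow> bool" where
  "append_disc_step V A C V' A' \<longleftrightarrow>
     (\<exists>v\<in>C. V' = insert (Suc (Max V)) V \<and> A' = insert (v, Suc (Max V)) A)"

definition append_deg_step ::
  "(nat \<times> nat) set \<Rightarrow> nat set \<Rightarrow> (nat \<times> nat) set \<Rightarrow> nat set \<Rightarrow> nat set \<Rightarrow> (nat \<times> nat) set \<Rightarrow> bool" where
  "append_deg_step UE V A C V' A' \<longleftrightarrow>
     (\<exists>Vin Vout v w. degen_witness UE V A C Vin Vout \<and> v \<in> Vin \<and> w \<in> Vout \<and>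
        ((\<exists>u\<in>Vout. nonleaf A u) \<longrightarrow> nonleaf A w) \<and>
        V' = V \<and> A' = insert (v,w) A)"

definition alg_step :: "(nat \<times> nat) set \<Rightarrow> nat set \<times> (nat \<times> nat) set \<Rightarrow> nat set \<times> (nat \<times> nat) set \<Rightarrow> bool" where
  "alg_step UE st st' \<longleftrightarrow>
     (let V = fst st; A = snd st; V' = fst st'; A' = snd st' in
      \<not> grounded V A \<and>
      (\<exists>C. leaf_SCC V A C \<and>
        ((msg_disconnected UE C \<and> append_disc_step V A C V' A') \<or>
         (degenerated UE V A C \<and> append_deg_step UE V A C V' A') \<or>
         ((msg_connected UE C \<or> (semi_msg_connected UE C \<and> \<not> degenerated UE V A C)) \<and>
          prune_step V A C V' A'))))"

definition alg_result ::
  "(nat \<times> nat) set \<Rightarrow> nat set \<Rightarrow> (nat \<times> nat) set \<Rightarrow> nat set \<Rightarrow> (nat \<times> nat) set \<Rightarrow> bool" where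
  "alg_result UE V A V' A' \<longleftrightarrow> (alg_step UE)\<^sup>*\<^sup>* (V, A) (V', A') \<and> grounded V' A'"

end

theory Submission
  imports Defs
begin

definition cwd :: "nat \<Rightarrow> (nat \<Rightarrow> (nat \<Rightarrow> bool) \<Rightarrow> bool list) \<Rightarrow> (nat \<Rightarrow> bool) \<Rightarrow> bool list list" where
  "cwd S enc x = map (\<lambda>s. enc s x) [1..<Suc S]"

definition EQ :: "nat \<Rightarrow> (nat \<Rightarrow> bool) \<Rightarrow> (nat \<Rightarrow> bool) \<Rightarrow> nat \<Rightarrow> bool" where
  "EQ n x y i \<longleftrightarrow> i \<notin> {1..n} \<or> x i = y i"

definition closedA :: "(nat \<Rightarrow> bool) \<Rightarrow> (nat \<times> nat) set \<Rightarrow> bool" where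
  "closedA P A \<longleftrightarrow> (\<forall>a b. (a,b) \<in> A \<longrightarrow> P b \<longrightarrow> P a)"

lemma closed_rtrancl:
  assumes "closedA P A" "(a,b) \<in> A\<^sup>*" "P b" shows "P a"
  using assms(2,3)
proof (induction rule: converse_rtrancl_induct)
  case base then show ?case .
next
  case (step u v) then show ?case using assms(1) unfolding closedA_def by blast
qed

lemma closed_trancl: "closedA P A \<Longrightarrow> (a,b) \<in> A\<^sup>+ \<Longrightarrow> P b \<Longrightarrow> P a"
  using trancl_into_rtrancl closed_rtrancl by metis

lemma leafSCC_nonleaf:
  assumes "leaf_SCC V A C" "v \<in> C" shows "nonleaf A v"
proof -
  have c2: "card C \<ge> 2" using assms(1) unfolding leaf_SCC_def by blast
  have "\<exists>u\<in>C. u \<noteq> v"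
  proof (rule ccontr)
    assume "\<not> ?thesis"
    hence "C \<subseteq> {v}" by auto
    hence "card C \<le> card {v}" by (rule card_mono[rotated]) simp
    with c2 show False by simp
  qed
  then obtain u where u: "u \<in> C" "u \<noteq> v" by blast
  have "(v,u) \<in> A\<^sup>*" using assms u unfolding leaf_SCC_def is_SCC_def by blast
  then obtain w where "(v,w) \<in> A" using u(2) by (cases rule: converse_rtranclE) auto
  thus ?thesis unfolding nonleaf_def by blast
qed

lemma concat_map_inj:
  "(\<And>s. s \<in> set ss \<Longrightarrow> length (f s) = length (g s)) \<Longrightarrow>
   concat (map f ss) = concat (map g ss) \<Longrightarrow> map f ss = map g ss"
  by (induction ss) (auto simp: append_eq_append_conv)

locale codeloc =
  fixes n S :: nat and M :: "nat \<Rightarrow> nat set" and enc :: "nat \<Rightarrow> (nat \<Rightarrow> bool) \<Rightarrow> bool list"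
  assumes loc: "\<forall>s\<in>{1..S}. \<forall>x y. (\<forall>k\<in>M s. x k = y k) \<longrightarrow> enc s x = enc s y"
    and Msub: "\<forall>s\<in>{1..S}. M s \<subseteq> {1..n}"
begin

definition Inv where
  "Inv V A \<longleftrightarrow> finite V \<and> {1..n} \<subseteq> V \<and> (\<forall>a b. (a,b) \<in> A \<longrightarrow> a \<in> {1..n}) \<and>
    (\<forall>x y. cwd S enc x = cwd S enc y \<longrightarrow> (\<forall>i\<in>{1..n}. \<not> nonleaf A i \<longrightarrow> x i = y i)
       \<longrightarrow> closedA (EQ n x y) A)"

lemma cwd_comp: assumes "cwd S enc x = cwd S enc y" "s \<in> {1..S}" shows "enc s x = enc s y"
proof -
  have "\<forall>t\<in>set [1..<Suc S]. enc t x = enc t y" using assms(1) by (simp only: cwd_def map_eq_conv)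
  moreover have "s \<in> set [1..<Suc S]" using assms(2) by auto
  ultimately show ?thesis by blast
qed

lemma mix:
  assumes "cwd S enc x = cwd S enc y"
    and "\<forall>s\<in>{1..S}. (\<exists>a\<in>K. a \<in> M s) \<longrightarrow> (\<forall>m\<in>M s. m \<in> K \<or> x m = y m)"
  shows "cwd S enc (\<lambda>i. if i \<in> K then y i else x i) = cwd S enc x"
  unfolding cwd_def
proof (rule map_cong[OF refl])
  fix s assume "s \<in> set [1..<Suc S]"
  hence s: "s \<in> {1..S}" by auto
  show "enc s (\<lambda>i. if i \<in> K then y i else x i) = enc s x"
  proof (cases "\<exists>a\<in>K. a \<in> M s")
    case True
    hence "\<forall>m\<in>M s. (if m \<in> K then y m else x m) = y m" using assms(2) s by auto
    hence eqy: "\<And>m. m \<in> M s \<Longrightarrow> (if m \<in> K then y m else x m) = y m" by blast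
    have "enc s (\<lambda>i. if i \<in> K then y i else x i) = enc s y" by (rule loc[rule_format, OF s]) (rule eqy)
    also have "\<dots> = enc s x" using cwd_comp[OF assms(1) s] by simp
    finally show ?thesis .
  next
    case False
    hence "\<forall>m\<in>M s. (if m \<in> K then y m else x m) = x m" by auto
    hence eqx: "\<And>m. m \<in> M s \<Longrightarrow> (if m \<in> K then y m else x m) = x m" by blast
    show ?thesis by (rule loc[rule_format, OF s]) (rule eqx)
  qed
qed

lemma prune_pres:
  assumes "Inv V A" "prune_step V A C V' A'"
  shows "Inv V' A'"
proof -
  obtain v where V': "V' = V" and A': "A' = A - {(v,w) | w. True}"
    using assms(2) unfolding prune_step_def by blast
  have sub: "A' \<subseteq> A" using A' by auto
  have nl: "\<And>i. nonleaf A' i \<Longrightarrow> nonleaf A i" using sub unfolding nonleaf_def by blast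
  have fin: "finite V" and subn: "{1..n} \<subseteq> V" and src: "\<forall>a b. (a,b) \<in> A \<longrightarrow> a \<in> {1..n}"
    and cl: "\<And>x y. cwd S enc x = cwd S enc y \<Longrightarrow> (\<forall>i\<in>{1..n}. \<not> nonleaf A i \<longrightarrow> x i = y i)
       \<Longrightarrow> closedA (EQ n x y) A"
    using assms(1) unfolding Inv_def by auto
  show ?thesis unfolding Inv_def
  proof (intro conjI allI impI)
    show "finite V'" using fin V' by simp
    show "{1..n} \<subseteq> V'" using subn V' by auto
    fix a b assume "(a,b) \<in> A'" thus "a \<in> {1..n}" using src sub by auto
  next
    fix x y assume cw: "cwd S enc x = cwd S enc y"
      and ag': "\<forall>i\<in>{1..n}. \<not> nonleaf A' i \<longrightarrow> x i = y i"
    have ag: "\<forall>i\<in>{1..n}. \<not> nonleaf A i \<longrightarrow> x i = y i" using ag' nl by blast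
    have "closedA (EQ n x y) A" using cl[OF cw ag] .
    thus "closedA (EQ n x y) A'" using sub unfolding closedA_def by blast
  qed
qed

lemma disc_pres:
  assumes "Inv V A" "leaf_SCC V A C" "msg_disconnected (msg_edges S M) C"
    "append_disc_step V A C V' A'"
  shows "Inv V' A'"
proof -
  obtain v where v: "v \<in> C" and V': "V' = insert (Suc (Max V)) V"
    and A': "A' = insert (v, Suc (Max V)) A"
    using assms(4) unfolding append_disc_step_def by blast
  have fin: "finite V" and sub: "{1..n} \<subseteq> V" and src: "\<forall>a b. (a,b) \<in> A \<longrightarrow> a \<in> {1..n}"
    and cl: "\<And>x y. cwd S enc x = cwd S enc y \<Longrightarrow> (\<forall>i\<in>{1..n}. \<not> nonleaf A i \<longrightarrow> x i = y i)
       \<Longrightarrow> closedA (EQ n x y) A"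
    using assms(1) unfolding Inv_def by auto
  have vnl: "nonleaf A v" using leafSCC_nonleaf[OF assms(2) v] .
  have vn: "v \<in> {1..n}" using vnl src unfolding nonleaf_def by blast
  have nl: "\<And>i. nonleaf A' i \<Longrightarrow> nonleaf A i" using vnl unfolding A' nonleaf_def by auto
  have key: "x c = y c" if cw: "cwd S enc x = cwd S enc y"
    and ag: "\<forall>i\<in>{1..n}. \<not> nonleaf A i \<longrightarrow> x i = y i" and c: "c \<in> C" for x y c
  proof -
    let ?R = "msg_edges S M \<union> (msg_edges S M)\<inverse>"
    define K where "K = {j. (c,j) \<in> ?R\<^sup>*}"
    have symR: "?R\<inverse> = ?R" by auto
    obtain a b where ab: "a \<in> C" "b \<in> C" "(a,b) \<notin> ?R\<^sup>*"
      using assms(3) unfolding msg_disconnected_def by blast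
    have "\<exists>b'\<in>C. b' \<notin> K"
    proof (rule ccontr)
      assume "\<not> ?thesis"
      hence ca: "(c,a) \<in> ?R\<^sup>*" and cb: "(c,b) \<in> ?R\<^sup>*" using ab unfolding K_def by auto
      from ca have "(a,c) \<in> (?R\<inverse>)\<^sup>*" using rtrancl_converseI[of c a ?R] by simp
      hence "(a,c) \<in> ?R\<^sup>*" using symR by simp
      from this cb have "(a,b) \<in> ?R\<^sup>*" by (rule rtrancl_trans)
      with ab(3) show False by simp
    qed
    then obtain b' where b': "b' \<in> C" "b' \<notin> K" by blast
    define z where "z = (\<lambda>i. if i \<in> K then y i else x i)"
    have "\<forall>s\<in>{1..S}. (\<exists>a\<in>K. a \<in> M s) \<longrightarrow> (\<forall>m\<in>M s. m \<in> K \<or> x m = y m)"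
    proof (intro ballI impI)
      fix s m assume s: "s \<in> {1..S}" and ex: "\<exists>a\<in>K. a \<in> M s" and m: "m \<in> M s"
      then obtain a where a: "a \<in> K" "a \<in> M s" by blast
      show "m \<in> K \<or> x m = y m"
      proof (cases "m = a")
        case True then show ?thesis using a by simp
      next
        case False
        hence "(a,m) \<in> msg_edges S M" using s a m unfolding msg_edges_def by auto
        hence "(a,m) \<in> ?R" by blast
        with a(1) have "(c,m) \<in> ?R\<^sup>*" unfolding K_def by (auto intro: rtrancl_into_rtrancl)
        thus ?thesis unfolding K_def by simp
      qed
    qed
    hence cwz: "cwd S enc z = cwd S enc x" using mix[OF cw] unfolding z_def by blast
    have agz: "\<forall>i\<in>{1..n}. \<not> nonleaf A i \<longrightarrow> x i = z i" using ag unfolding z_def by auto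
    have clz: "closedA (EQ n x z) A" using cl[OF cwz[symmetric] agz] .
    have "(c,b') \<in> A\<^sup>*" using assms(2) c b'(1) unfolding leaf_SCC_def is_SCC_def by blast
    moreover have "EQ n x z b'" using b'(2) unfolding EQ_def z_def by simp
    ultimately have "EQ n x z c" using closed_rtrancl[OF clz] by blast
    moreover have "c \<in> {1..n}" using src leafSCC_nonleaf[OF assms(2) c] unfolding nonleaf_def by blast
    moreover have "c \<in> K" unfolding K_def by simp
    ultimately show "x c = y c" unfolding EQ_def z_def by simp
  qed
  show ?thesis unfolding Inv_def
  proof (intro conjI allI impI)
    show "finite V'" using fin V' by simp
    show "{1..n} \<subseteq> V'" using sub V' by auto
    fix a b assume "(a,b) \<in> A'" thus "a \<in> {1..n}" using src vn A' by auto
  next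
    fix x y assume cw: "cwd S enc x = cwd S enc y"
      and ag': "\<forall>i\<in>{1..n}. \<not> nonleaf A' i \<longrightarrow> x i = y i"
    have ag: "\<forall>i\<in>{1..n}. \<not> nonleaf A i \<longrightarrow> x i = y i" using ag' nl by blast
    have clA: "closedA (EQ n x y) A" using cl[OF cw ag] .
    have "EQ n x y v" using key[OF cw ag v] unfolding EQ_def by simp
    thus "closedA (EQ n x y) A'" using clA unfolding A' closedA_def by auto
  qed
qed

lemma deg_pres:
  assumes "Inv V A" "leaf_SCC V A C" "append_deg_step (msg_edges S M) V A C V' A'"
  shows "Inv V' A'"
proof -
  obtain Vin Vout v w where W: "degen_witness (msg_edges S M) V A C Vin Vout"
    and v: "v \<in> Vin" and w: "w \<in> Vout"
    and wnl: "(\<exists>u\<in>Vout. nonleaf A u) \<longrightarrow> nonleaf A w" and V': "V' = V" and A': "A' = insert (v,w) A"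
    using assms(3) unfolding append_deg_step_def by blast
  have fin: "finite V" and sub: "{1..n} \<subseteq> V" and src: "\<forall>a b. (a,b) \<in> A \<longrightarrow> a \<in> {1..n}"
    and cl: "\<And>x y. cwd S enc x = cwd S enc y \<Longrightarrow> (\<forall>i\<in>{1..n}. \<not> nonleaf A i \<longrightarrow> x i = y i)
       \<Longrightarrow> closedA (EQ n x y) A"
    using assms(1) unfolding Inv_def by auto
  have VinC: "Vin \<subset> C" and VoutV: "Vout \<subseteq> V - C"
    and card1: "card {u\<in>Vout. nonleaf A u} \<le> 1"
    and nb: "\<forall>u. u \<notin> Vin \<and> (\<exists>w\<in>Vin. (w,u) \<in> msg_edges S M \<or> (u,w) \<in> msg_edges S M) \<longrightarrow>
          u \<in> Vout \<or> (\<exists>t\<in>Vout. (u,t) \<in> A)"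
    using W unfolding degen_witness_def by auto
  have vC: "v \<in> C" using VinC v by auto
  have vnl: "nonleaf A v" using leafSCC_nonleaf[OF assms(2) vC] .
  have vn: "v \<in> {1..n}" using vnl src unfolding nonleaf_def by blast
  have nl: "\<And>i. nonleaf A' i \<Longrightarrow> nonleaf A i" using vnl unfolding A' nonleaf_def by auto
  have finset: "finite {u\<in>Vout. nonleaf A u}"
  proof (rule finite_subset[OF _ fin])
    show "{u\<in>Vout. nonleaf A u} \<subseteq> V" using VoutV by auto
  qed
  have key: "x v = y v" if cw: "cwd S enc x = cwd S enc y"
    and ag: "\<forall>i\<in>{1..n}. \<not> nonleaf A i \<longrightarrow> x i = y i" and Ew: "EQ n x y w" for x y
  proof -
    have clA: "closedA (EQ n x y) A" using cl[OF cw ag] .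
    have Vout_eq: "EQ n x y t" if t: "t \<in> Vout" for t
    proof (cases "nonleaf A t")
      case True
      have wn: "nonleaf A w" using wnl t True by blast
      show ?thesis
      proof (cases "t = w")
        case True thus ?thesis using Ew by simp
      next
        case False
        have "{t,w} \<subseteq> {u\<in>Vout. nonleaf A u}" using t w \<open>nonleaf A t\<close> wn by auto
        hence "card {t,w} \<le> card {u\<in>Vout. nonleaf A u}" using card_mono[OF finset] by blast
        with False card1 show ?thesis by simp
      qed
    next
      case False then show ?thesis using ag unfolding EQ_def by auto
    qed
    have sendok: "\<forall>s\<in>{1..S}. (\<exists>a\<in>Vin. a \<in> M s) \<longrightarrow> (\<forall>m\<in>M s. m \<in> Vin \<or> x m = y m)"
    proof (intro ballI impI)
      fix s m assume s: "s \<in> {1..S}" and ex: "\<exists>a\<in>Vin. a \<in> M s" and m: "m \<in> M s"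
      then obtain a where a: "a \<in> Vin" "a \<in> M s" by blast
      show "m \<in> Vin \<or> x m = y m"
      proof (cases "m \<in> Vin")
        case True thus ?thesis by simp
      next
        case False
        hence "m \<noteq> a" using a by auto
        hence "(a,m) \<in> msg_edges S M" using s a m unfolding msg_edges_def by auto
        hence "m \<in> Vout \<or> (\<exists>t\<in>Vout. (m,t) \<in> A)" using nb False a(1) by blast
        hence "EQ n x y m" using Vout_eq clA unfolding closedA_def by blast
        moreover have "m \<in> {1..n}" using Msub s m by blast
        ultimately show ?thesis unfolding EQ_def by simp
      qed
    qed
    define z where "z = (\<lambda>i. if i \<in> Vin then y i else x i)"
    have cwz: "cwd S enc z = cwd S enc x" using mix[OF cw sendok] unfolding z_def by blast
    have agz: "\<forall>i\<in>{1..n}. \<not> nonleaf A i \<longrightarrow> x i = z i" using ag unfolding z_def by auto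
    have clz: "closedA (EQ n x z) A" using cl[OF cwz[symmetric] agz] .
    obtain b where b: "b \<in> C" "b \<notin> Vin" using VinC by blast
    have "(v,b) \<in> A\<^sup>*" using assms(2) vC b(1) unfolding leaf_SCC_def is_SCC_def by blast
    moreover have "EQ n x z b" using b(2) unfolding EQ_def z_def by simp
    ultimately have "EQ n x z v" using closed_rtrancl[OF clz] by blast
    thus "x v = y v" using vn v unfolding EQ_def z_def by simp
  qed
  show ?thesis unfolding Inv_def
  proof (intro conjI allI impI)
    show "finite V'" using fin V' by simp
    show "{1..n} \<subseteq> V'" using sub V' by auto
    fix a b assume "(a,b) \<in> A'" thus "a \<in> {1..n}" using src vn A' by auto
  next
    fix x y assume cw: "cwd S enc x = cwd S enc y"
      and ag': "\<forall>i\<in>{1..n}. \<not> nonleaf A' i \<longrightarrow> x i = y i"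
    have ag: "\<forall>i\<in>{1..n}. \<not> nonleaf A i \<longrightarrow> x i = y i" using ag' nl by blast
    have clA: "closedA (EQ n x y) A" using cl[OF cw ag] .
    have "EQ n x y w \<longrightarrow> EQ n x y v" using key[OF cw ag] vn unfolding EQ_def by blast
    thus "closedA (EQ n x y) A'" using clA unfolding A' closedA_def by auto
  qed
qed

lemma step_pres:
  assumes "Inv (fst st) (snd st)" "alg_step (msg_edges S M) st st'"
  shows "Inv (fst st') (snd st')"
proof -
  obtain V A where st: "st = (V,A)" by (cases st)
  obtain V' A' where st': "st' = (V',A')" by (cases st')
  from assms(2) obtain C where C: "leaf_SCC V A C" and
    cs: "(msg_disconnected (msg_edges S M) C \<and> append_disc_step V A C V' A') \<or>
         (degenerated (msg_edges S M) V A C \<and> append_deg_step (msg_edges S M) V A C V' A') \<or>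
         ((msg_connected (msg_edges S M) C \<or> (semi_msg_connected (msg_edges S M) C \<and> \<not> degenerated (msg_edges S M) V A C)) \<and>
          prune_step V A C V' A')"
    unfolding alg_step_def Let_def st st' by auto
  have I: "Inv V A" using assms(1) st by simp
  from cs have "Inv V' A'"
    using disc_pres[OF I C] deg_pres[OF I C] prune_pres[OF I] by blast
  thus ?thesis using st' by simp
qed

lemma steps_pres:
  assumes "(alg_step (msg_edges S M))\<^sup>*\<^sup>* st st'" "Inv (fst st) (snd st)"
  shows "Inv (fst st') (snd st')"
  using assms by (induction rule: rtranclp_induct) (auto intro: step_pres)

lemma init:
  assumes "A \<subseteq> {1..n} \<times> {1..n}" "valid_code S M A l enc"
  shows "Inv {1..n} A"
  unfolding Inv_def
proof (intro conjI allI impI)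
  show "finite {1..n}" by simp
  show "{1..n} \<subseteq> {1..n}" by simp
  fix a b assume "(a,b) \<in> A" thus "a \<in> {1..n}" using assms(1) by auto
next
  fix x y assume cw: "cwd S enc x = cwd S enc y"
  show "closedA (EQ n x y) A" unfolding closedA_def
  proof (intro allI impI)
    fix a b assume ab: "(a,b) \<in> A" and Eb: "EQ n x y b"
    have bn: "b \<in> {1..n}" using ab assms(1) by auto
    have dec: "\<forall>(i,j)\<in>A. \<exists>D :: bool list list \<Rightarrow> bool \<Rightarrow> bool.
         \<forall>x. D (map (\<lambda>s. enc s x) [1..<Suc S]) (x j) = x i"
      using assms(2) unfolding valid_code_def by (rule conjunct2[OF conjunct2])
    obtain D where D: "\<forall>x. D (map (\<lambda>s. enc s x) [1..<Suc S]) (x b) = x a"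
      using bspec[OF dec ab] by auto
    have "x a = D (cwd S enc x) (x b)" using D unfolding cwd_def by simp
    also have "\<dots> = D (cwd S enc y) (y b)" using cw Eb bn unfolding EQ_def by simp
    also have "\<dots> = y a" using D unfolding cwd_def by simp
    finally show "EQ n x y a" unfolding EQ_def by simp
  qed
qed

lemma final:
  assumes "Inv V A" "grounded V A" and len: "\<forall>s\<in>{1..S}. \<forall>x. length (enc s x) = l s"
  shows "V_out V A \<le> (\<Sum>s\<in>{1..S}. l s)"
proof -
  have src: "\<forall>a b. (a,b) \<in> A \<longrightarrow> a \<in> {1..n}"
    and cl: "\<And>x y. cwd S enc x = cwd S enc y \<Longrightarrow> (\<forall>i\<in>{1..n}. \<not> nonleaf A i \<longrightarrow> x i = y i)
       \<Longrightarrow> closedA (EQ n x y) A"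
    using assms(1) unfolding Inv_def by auto
  define N where "N = {v\<in>V. nonleaf A v}"
  define L where "L = (\<Sum>s\<in>{1..S}. l s)"
  have Nn: "N \<subseteq> {1..n}" using src unfolding N_def nonleaf_def by blast
  have finN: "finite N" using Nn finite_subset by blast
  define f where "f X = concat (cwd S enc (\<lambda>i. i \<in> X))" for X
  have lenf: "length (f X) = L" for X
  proof -
    have "length (f X) = sum_list (map (\<lambda>s. length (enc s (\<lambda>i. i \<in> X))) [1..<Suc S])"
      unfolding f_def cwd_def by (simp add: length_concat comp_def)
    also have "\<dots> = sum_list (map l [1..<Suc S])"
      using len by (intro arg_cong[where f=sum_list] map_cong) auto
    also have "\<dots> = sum l {1..<Suc S}"
      by (simp only: sum_set_upt_conv_sum_list_nat[symmetric] set_upt)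
    finally show ?thesis unfolding L_def atLeastLessThanSuc_atLeastAtMost .
  qed
  have inj: "inj_on f (Pow N)"
  proof (rule inj_onI)
    fix X Y assume X: "X \<in> Pow N" and Y: "Y \<in> Pow N" and fe: "f X = f Y"
    define x where "x = (\<lambda>i. i \<in> X)"
    define y where "y = (\<lambda>i. i \<in> Y)"
    have cw: "cwd S enc x = cwd S enc y"
      unfolding cwd_def x_def y_def
      by (rule concat_map_inj) (use len fe in \<open>auto simp: f_def cwd_def\<close>)
    have ag: "\<forall>i\<in>{1..n}. \<not> nonleaf A i \<longrightarrow> x i = y i"
      using X Y unfolding x_def y_def N_def by auto
    have clA: "closedA (EQ n x y) A" using cl[OF cw ag] .
    show "X = Y"
    proof (rule set_eqI)
      fix v show "v \<in> X \<longleftrightarrow> v \<in> Y"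
      proof (cases "v \<in> N")
        case True
        hence vV: "v \<in> V" and vnl: "nonleaf A v" unfolding N_def by auto
        obtain u where u: "\<not> nonleaf A u" "(v,u) \<in> A\<^sup>+"
          using assms(2) vV vnl unfolding grounded_def by blast
        have "EQ n x y u" using ag u(1) unfolding EQ_def by auto
        hence "EQ n x y v" using closed_trancl[OF clA u(2)] by blast
        thus ?thesis using True Nn unfolding EQ_def x_def y_def by auto
      next
        case False thus ?thesis using X Y by auto
      qed
    qed
  qed
  have img: "f ` Pow N \<subseteq> {xs. set xs \<subseteq> (UNIV::bool set) \<and> length xs = L}"
    using lenf by auto
  have "(2::nat) ^ card N = card (Pow N)" using card_Pow[OF finN] by simp
  also have "\<dots> = card (f ` Pow N)" using card_image[OF inj] by simp
  also have "\<dots> \<le> card {xs. set xs \<subseteq> (UNIV::bool set) \<and> length xs = L}"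
    using card_mono[OF finite_lists_length_eq[of "UNIV::bool set" L] img] by simp
  also have "\<dots> = 2 ^ L" using card_lists_length_eq[of "UNIV::bool set" L] by simp
  finally have "(2::nat) ^ card N \<le> 2 ^ L" .
  hence "card N \<le> L" by simp
  thus ?thesis unfolding V_out_def N_def L_def .
qed

end

lemma trivial_code:
  assumes "\<forall>s\<in>{1..S}. M s \<subseteq> {1..n}" "(\<Union>s\<in>{1..S}. M s) = {1..n}"
    "A \<subseteq> {1..n} \<times> {1..n}"
  shows "valid_code S M A (\<lambda>s. n) (\<lambda>s x. map (\<lambda>i. if i \<in> M s then x i else False) [1..<Suc n])"
  unfolding valid_code_def
proof (intro conjI ballI allI impI)
  fix s and x y :: "nat \<Rightarrow> bool" assume "s \<in> {1..S}" "\<forall>k\<in>M s. x k = y k"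
  thus "map (\<lambda>i. if i \<in> M s then x i else False) [1..<Suc n] =
        map (\<lambda>i. if i \<in> M s then y i else False) [1..<Suc n]" by auto
next
  fix p assume p: "p \<in> A"
  obtain i j where ij: "p = (i,j)" by (cases p)
  have i: "i \<in> {1..n}" using p ij assms(3) by auto
  then obtain s where s: "s \<in> {1..S}" "i \<in> M s" using assms(2) by blast
  have "\<forall>x::nat\<Rightarrow>bool. map (\<lambda>s. map (\<lambda>i. if i \<in> M s then x i else False) [1..<Suc n]) [1..<Suc S] ! (s-1) ! (i-1) = x i"
  proof
    fix x :: "nat \<Rightarrow> bool"
    have a: "map (\<lambda>s. map (\<lambda>i. if i \<in> M s then x i else False) [1..<Suc n]) [1..<Suc S] ! (s-1)
        = map (\<lambda>i. if i \<in> M s then x i else False) [1..<Suc n]"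
    proof -
      have lt: "s - 1 < length [1..<Suc S]" using s by (simp, linarith)
      have eq: "[1..<Suc S] ! (s-1) = s" using s by (simp add: nth_upt del: upt_Suc)
      show ?thesis unfolding nth_map[OF lt] eq by (rule refl)
    qed
    have b: "map (\<lambda>i. if i \<in> M s then x i else False) [1..<Suc n] ! (i-1) = x i"
    proof -
      have lt: "i - 1 < length [1..<Suc n]" using i by (simp, linarith)
      have eq: "[1..<Suc n] ! (i-1) = i" using i by (simp add: nth_upt del: upt_Suc)
      show ?thesis unfolding nth_map[OF lt] eq using s by simp
    qed
    show "map (\<lambda>s. map (\<lambda>i. if i \<in> M s then x i else False) [1..<Suc n]) [1..<Suc S] ! (s-1) ! (i-1) = x i"
      using a b by simp
  qed
  hence "\<exists>D::bool list list \<Rightarrow> bool \<Rightarrow> bool. \<forall>x. D (map (\<lambda>s. map (\<lambda>i. if i \<in> M s then x i else False) [1..<Suc n]) [1..<Suc S]) (x j) = x i"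
    by (intro exI[where x="\<lambda>cws b. cws ! (s-1) ! (i-1)"] allI) (erule allE, assumption)
  thus "case p of (i, j) \<Rightarrow> \<exists>D. \<forall>x. D (map (\<lambda>s. map (\<lambda>i. if i \<in> M s then x i else False) [1..<Suc n]) [1..<Suc S]) (x j) = x i"
    unfolding ij prod.case .
qed simp

theorem theorem4:
  fixes n S :: nat and M :: "nat \<Rightarrow> nat set" and A :: "(nat \<times> nat) set"
  assumes "A \<subseteq> {1..n} \<times> {1..n}"
    and "\<forall>i. (i, i) \<notin> A"
    and "\<forall>s\<in>{1..S}. M s \<subseteq> {1..n}"
    and "(\<Union>s\<in>{1..S}. M s) = {1..n}"
  shows "\<forall>V' A'. alg_result (msg_edges S M) {1..n} A V' A' \<longrightarrow>
           V_out V' A' \<le> opt_codelength S M A"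
proof (intro allI impI)
  fix V' A' assume res: "alg_result (msg_edges S M) {1..n} A V' A'"
  have ex: "\<exists>L l E. valid_code S M A l E \<and> L = (\<Sum>s\<in>{1..S}. l s)"
    using trivial_code[OF assms(3,4,1)] by blast
  have "\<exists>l E. valid_code S M A l E \<and> opt_codelength S M A = (\<Sum>s\<in>{1..S}. l s)"
    unfolding opt_codelength_def using LeastI_ex[OF ex] .
  then obtain l E where vc: "valid_code S M A l E"
    and L: "opt_codelength S M A = (\<Sum>s\<in>{1..S}. l s)" by blast
  have locE: "\<forall>s\<in>{1..S}. \<forall>x y. (\<forall>k\<in>M s. x k = y k) \<longrightarrow> E s x = E s y"
    using vc unfolding valid_code_def by (rule conjunct1[OF conjunct2])
  interpret codeloc n S M E
    by unfold_locales (rule locE, rule assms(3))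
  have I0: "Inv {1..n} A" using init[OF assms(1) vc] .
  have steps: "(alg_step (msg_edges S M))\<^sup>*\<^sup>* ({1..n}, A) (V', A')" and gr: "grounded V' A'"
    using res unfolding alg_result_def by auto
  have "Inv V' A'" using steps_pres[OF steps] I0 by simp
  moreover have "\<forall>s\<in>{1..S}. \<forall>x. length (E s x) = l s" using vc unfolding valid_code_def by (rule conjunct1)
  ultimately show "V_out V' A' \<le> opt_codelength S M A" using final gr L by simp
qed

end
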